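(* Let $p$ be prime, $f:\mathrm{GF}(p)^n\to\mathrm{GF}(p)$ a polynomial function and $t=\prod_{j=1}^k x_{i_j}^{m_j}$ with distinct indices and $1\le m_j\le p-1$. Write $f=t\,f_{S(t)}+r$ with no monomial of $r$ divisible by $t$, and write $f_{S(t)}=t_1g_1+\cdots+t_ug_u$ where $g_1,\ldots,g_u$ are polynomials not depending on any of $x_{i_1},\ldots,x_{i_k}$ and $t_1,\ldots,t_u$ are all the distinct terms (monomials) in the variables $x_{i_1},\ldots,x_{i_k}$ appearing in $f_{S(t)}$. Let $\mathbf{u}$ be the $n$-tuple with $0$ in positions $i_1,\ldots,i_k$ and indeterminates elsewhere. Then \[ f_t(\mathbf{u}) = c_1g_1+\cdots+c_ug_u, \] where, if $t_s=x_{i_1}^{\ell_1}\cdots x_{i_k}^{\ell_k}$, the constant is $c_s=\prod_{j=1}^k D(m_j+\ell_j,m_j+\ell_j,m_j)\in\mathrm{GF}(p)$. In particular, if $f_{S(t)}$ does not depend on any of $x_{i_1},\ldots,x_{i_k}$, then $f_t=m_1!\cdots m_k!\,f_{S(t)}$.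
   Context: Polynomial functions over $\mathrm{GF}(p)$ are represented by their unique polynomial of degree at most $p-1$ in each variable. $f_t=\Delta^{(m_1)}_{\mathbf{e}_{i_1},\ldots,\mathbf{e}_{i_1}}\cdots\Delta^{(m_k)}_{\mathbf{e}_{i_k},\ldots,\mathbf{e}_{i_k}} f$ (difference $m_j$ times w.r.t. $x_{i_j}$ with step $1$), where $(\Delta_{\mathbf{a}} f)(\mathbf{x}) = f(\mathbf{x}+\mathbf{a})-f(\mathbf{x})$. For $1\le m\le j\le d$, $D(d,j,m)=\sum\binom{d}{i_1,\ldots,i_m,d-j}$ over $(i_1,\ldots,i_m)\in\{1,\ldots,j-m+1\}^m$ with $i_1+\cdots+i_m=j$ (multinomials read mod $p$). *)

theory Defs
  imports Main "HOL-Library.FuncSet" "HOL-Computational_Algebra.Primes"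
begin

text \<open>Polynomial functions over GF(p) in variables x_0,...,x_{n-1} are given by the
  coefficient function of their unique reduced polynomial: exponent vectors
  e :: nat => nat with e i < p for i < n and e i = 0 for i >= n.
  Points of GF(p)^n are functions x :: nat => 'a (only x 0,...,x (n-1) matter).\<close>

definition expvecs :: "nat \<Rightarrow> nat \<Rightarrow> (nat \<Rightarrow> nat) set" where
  "expvecs n p = {e. (\<forall>i<n. e i < p) \<and> (\<forall>i\<ge>n. e i = 0)}"

definition reduced_poly :: "nat \<Rightarrow> nat \<Rightarrow> ((nat \<Rightarrow> nat) \<Rightarrow> 'a::zero) \<Rightarrow> bool" where
  "reduced_poly n p C \<longleftrightarrow> (\<forall>e. C e \<noteq> 0 \<longrightarrow> e \<in> expvecs n p)"

definition monom_eval :: "nat \<Rightarrow> (nat \<Rightarrow> nat) \<Rightarrow> (nat \<Rightarrow> 'a::comm_ring_1) \<Rightarrow> 'a" where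
  "monom_eval n e x = (\<Prod>i<n. x i ^ e i)"

definition poly_eval :: "nat \<Rightarrow> nat \<Rightarrow> ((nat \<Rightarrow> nat) \<Rightarrow> 'a::comm_ring_1) \<Rightarrow> (nat \<Rightarrow> 'a) \<Rightarrow> 'a" where
  "poly_eval n p C x = (\<Sum>e\<in>expvecs n p. C e * monom_eval n e x)"

definition delta :: "nat \<Rightarrow> ((nat \<Rightarrow> 'a::comm_ring_1) \<Rightarrow> 'a) \<Rightarrow> (nat \<Rightarrow> 'a) \<Rightarrow> 'a" where
  "delta i F x = F (x(i := x i + 1)) - F x"

definition iter_diff :: "nat set \<Rightarrow> (nat \<Rightarrow> nat) \<Rightarrow> ((nat \<Rightarrow> 'a::comm_ring_1) \<Rightarrow> 'a) \<Rightarrow> (nat \<Rightarrow> 'a) \<Rightarrow> 'a" where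
  "iter_diff I m F = foldr (\<lambda>i G. (delta i ^^ m i) G) (sorted_list_of_set I) F"

definition multinom :: "nat \<Rightarrow> nat \<Rightarrow> (nat \<Rightarrow> nat) \<Rightarrow> nat" where
  "multinom d m is = fact d div ((\<Prod>k<m. fact (is k)) * fact (d - (\<Sum>k<m. is k)))"

definition Dcoef :: "nat \<Rightarrow> nat \<Rightarrow> nat \<Rightarrow> 'a::semiring_1" where
  "Dcoef d j m = of_nat (\<Sum>is\<in>{is \<in> PiE {..<m} (\<lambda>_. {1..j-m+1}). (\<Sum>k<m. is k) = j}.
                             multinom d m is)"

text \<open>Coefficients of f_{S(t)} where t = prod_{i in I} x_i^{m i}: f = t f_{S(t)} + r.\<close>
definition fS :: "nat set \<Rightarrow> (nat \<Rightarrow> nat) \<Rightarrow> ((nat \<Rightarrow> nat) \<Rightarrow> 'a) \<Rightarrow> (nat \<Rightarrow> nat) \<Rightarrow> 'a" where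
  "fS I m C d = C (\<lambda>i. if i \<in> I then d i + m i else d i)"

text \<open>Terms t_s in the variables x_i (i in I) occurring in f_{S(t)}, given by their
  exponent vectors l (supported in I).\<close>
definition terms_in :: "nat set \<Rightarrow> ((nat \<Rightarrow> nat) \<Rightarrow> 'a::zero) \<Rightarrow> (nat \<Rightarrow> nat) set" where
  "terms_in I G = {l. (\<forall>i. i \<notin> I \<longrightarrow> l i = 0) \<and> (\<exists>d. G d \<noteq> 0 \<and> (\<forall>i\<in>I. d i = l i))}"

definition cofactor :: "nat \<Rightarrow> nat \<Rightarrow> nat set \<Rightarrow> ((nat \<Rightarrow> nat) \<Rightarrow> 'a::comm_ring_1) \<Rightarrow> (nat \<Rightarrow> nat) \<Rightarrow> (nat \<Rightarrow> 'a) \<Rightarrow> 'a" where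
  "cofactor n p I G l x =
     (\<Sum>d\<in>{d\<in>expvecs n p. \<forall>i\<in>I. d i = l i}. G d * (\<Prod>i\<in>{..<n} - I. x i ^ d i))"

end

theory Submission
  imports Defs
begin

definition Sset :: "nat \<Rightarrow> nat \<Rightarrow> (nat \<Rightarrow> nat) set" where
  "Sset j m = {v \<in> PiE {..<m} (\<lambda>_. {1..j}). (\<Sum>k<m. v k) = j}"

fun R :: "nat \<Rightarrow> nat \<Rightarrow> nat" where
  "R a 0 = (if a = 0 then 1 else 0)"
| "R a (Suc m) = (\<Sum>k<a. (a choose k) * R k m)"

lemma prod_fact_dvd: fixes m :: nat and v :: "nat \<Rightarrow> nat" shows "(\<Prod>k<m. fact (v k)) dvd (fact (\<Sum>k<m. v k) :: nat)"
proof (induction m)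
  case 0 then show ?case by simp
next
  case (Suc m)
  let ?s = "\<Sum>k<m. v k"
  have "fact (?s + v m) = fact ?s * fact (v m) * ((?s + v m) choose ?s)"
    using binomial_fact_lemma[of ?s "?s + v m"] by simp
  then have "fact ?s * fact (v m) dvd (fact (?s + v m) :: nat)" by simp
  moreover have "(\<Prod>k<m. fact (v k)) * fact (v m) dvd fact ?s * (fact (v m) :: nat)"
    using Suc by (simp add: mult_dvd_mono)
  ultimately have "(\<Prod>k<m. fact (v k)) * fact (v m) dvd (fact (?s + v m) :: nat)"
    by (rule dvd_trans[rotated])
  then show ?case by simp
qed

lemma multinom_eq:
  assumes "(\<Sum>k<m. v k) = j"
  shows "fact j = multinom j m v * (\<Prod>k<m. fact (v k))"
proof -
  have "multinom j m v = fact j div (\<Prod>k<m. fact (v k))"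
    unfolding multinom_def using assms by simp
  then show ?thesis using prod_fact_dvd[where m=m and v=v] assms by simp
qed

lemma finite_Sset: "finite (Sset j m)"
  unfolding Sset_def by (rule finite_subset[of _ "PiE {..<m} (\<lambda>_. {1..j})"]) (auto intro: finite_PiE)

lemma multinom_step:
  assumes "v \<in> Sset k m" "k < a"
  shows "multinom a (Suc m) (v(m := a - k)) = (a choose k) * multinom k m v"
proof -
  have sk: "(\<Sum>j<m. v j) = k" using assms unfolding Sset_def by auto
  have s2: "(\<Sum>j<Suc m. (v(m := a - k)) j) = a"
    using sk assms(2) by simp
  have p2: "(\<Prod>j<Suc m. fact ((v(m := a - k)) j)) = (\<Prod>j<m. fact (v j)) * (fact (a - k) :: nat)"
    by simp
  have e1: "fact a = multinom a (Suc m) (v(m := a - k)) * ((\<Prod>j<m. fact (v j)) * fact (a - k))"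
    by (subst p2[symmetric]) (rule multinom_eq[OF s2])
  have e2: "fact k = multinom k m v * (\<Prod>j<m. fact (v j))"
    using multinom_eq[OF sk] .
  have e3: "fact a = fact k * fact (a - k) * (a choose k)"
    using binomial_fact_lemma[of k a] assms(2) by simp
  have "multinom a (Suc m) (v(m := a - k)) * ((\<Prod>j<m. fact (v j)) * fact (a - k))
      = ((a choose k) * multinom k m v) * ((\<Prod>j<m. fact (v j)) * fact (a - k))"
    using e1 e2 e3 by (simp add: ac_simps)
  moreover have "(\<Prod>j<m. fact (v j)) * fact (a - k) \<noteq> (0::nat)" by simp
  ultimately show ?thesis by simp
qed

lemma Sset_rec:
  "(\<Sum>v\<in>Sset a (Suc m). multinom a (Suc m) v)
   = (\<Sum>k<a. (a choose k) * (\<Sum>v\<in>Sset k m. multinom k m v))"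
proof -
  have "(\<Sum>k<a. (a choose k) * (\<Sum>v\<in>Sset k m. multinom k m v))
      = (\<Sum>k<a. \<Sum>v\<in>Sset k m. (a choose k) * multinom k m v)"
    by (simp add: sum_distrib_left)
  also have "\<dots> = (\<Sum>(k, v)\<in>Sigma {..<a} (\<lambda>k. Sset k m). (a choose k) * multinom k m v)"
    by (rule sum.Sigma) (auto simp: finite_Sset)
  also have "\<dots> = (\<Sum>v\<in>Sset a (Suc m). multinom a (Suc m) v)"
  proof (rule sum.reindex_bij_witness[where j = "\<lambda>(k, v). v(m := a - k)"
        and i = "\<lambda>v. (a - v m, v(m := undefined))"])
    fix x assume x: "x \<in> Sigma {..<a} (\<lambda>k. Sset k m)"
    then obtain k "v" where xe: "x = (k, v)" "k < a" "v \<in> Sset k m" by auto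
    then have ism: "v m = undefined" unfolding Sset_def by (auto simp: PiE_iff extensional_def)
    have "\<forall>j<m. v j \<in> {1..k}" "(\<Sum>j<m. v j) = k" "\<forall>j. j \<ge> m \<longrightarrow> v j = undefined"
      using xe unfolding Sset_def by (auto simp: PiE_iff extensional_def)
    then show "(case x of (k, v) \<Rightarrow> v(m := a - k)) \<in> Sset a (Suc m)"
      using xe unfolding Sset_def by (auto simp: PiE_iff extensional_def less_Suc_eq)
    show "(\<lambda>v. (a - v m, v(m := undefined))) (case x of (k, v) \<Rightarrow> v(m := a - k)) = x"
      using xe ism by auto
    show "multinom a (Suc m) (case x of (k, v) \<Rightarrow> v(m := a - k)) =
          (case x of (k, v) \<Rightarrow> (a choose k) * multinom k m v)"
      using xe multinom_step by auto
  next
    fix y assume y: "y \<in> Sset a (Suc m)"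
    then have y1: "\<forall>j<Suc m. y j \<in> {1..a}" "\<forall>j. j \<ge> Suc m \<longrightarrow> y j = undefined"
      and y2: "(\<Sum>j<m. y j) + y m = a"
      unfolding Sset_def by (auto simp: PiE_iff extensional_def)
    have le: "\<And>j. j < m \<Longrightarrow> y j \<le> (\<Sum>j<m. y j)"
      by (rule member_le_sum) auto
    show "(case (a - y m, y(m := undefined)) of (k, v) \<Rightarrow> v(m := a - k)) = y"
      using y1 by auto
    show "(a - y m, y(m := undefined)) \<in> Sigma {..<a} (\<lambda>k. Sset k m)"
      using y1 y2 le unfolding Sset_def
      by (auto simp: PiE_iff extensional_def)
  qed
  finally show ?thesis by simp
qed

lemma Sset_R: "(\<Sum>v\<in>Sset a m. multinom a m v) = R a m"
proof (induction m arbitrary: a)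
  case 0
  have "Sset a 0 = (if a = 0 then {\<lambda>_. undefined} else {})"
    unfolding Sset_def by auto
  then show ?case by (simp add: multinom_def)
next
  case (Suc m)
  then show ?case by (simp add: Sset_rec)
qed

lemma Dcoef_R:
  assumes "1 \<le> m"
  shows "Dcoef a a m = (of_nat (R a m) :: 'a::semiring_1)"
proof -
  have "{v \<in> PiE {..<m} (\<lambda>_. {1..a-m+1}). (\<Sum>k<m. v k) = a} = Sset a m"
  proof
    show "{v \<in> PiE {..<m} (\<lambda>_. {1..a-m+1}). (\<Sum>k<m. v k) = a} \<subseteq> Sset a m"
      unfolding Sset_def using assms by (auto simp: PiE_iff intro!: member_le_sum)
  next
    show "Sset a m \<subseteq> {v \<in> PiE {..<m} (\<lambda>_. {1..a-m+1}). (\<Sum>k<m. v k) = a}"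
    proof
      fix y assume y: "y \<in> Sset a m"
      then have y1: "\<forall>j<m. y j \<in> {1..a}" and y2: "(\<Sum>j<m. y j) = a" and ye: "y \<in> extensional {..<m}"
        unfolding Sset_def by (auto simp: PiE_iff)
      have le: "\<And>j. j < m \<Longrightarrow> y j \<le> (\<Sum>j<m. y j)"
        by (rule member_le_sum) auto
      have "y k \<le> a - m + 1" if k: "k < m" for k
      proof -
        have "(\<Sum>j<m. y j) = y k + (\<Sum>j\<in>{..<m}-{k}. y j)"
          using k by (simp add: sum.remove)
        moreover have "(\<Sum>j\<in>{..<m}-{k}. y j) \<ge> (\<Sum>j\<in>{..<m}-{k}. 1)"
          using y1 by (intro sum_mono) auto
        moreover have "(\<Sum>j\<in>{..<m}-{k}. (1::nat)) = m - 1" using k by simp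
        ultimately show ?thesis using y2 by linarith
      qed
      then show "y \<in> {v \<in> PiE {..<m} (\<lambda>_. {1..a-m+1}). (\<Sum>k<m. v k) = a}"
        using y1 y2 ye le by (auto simp: PiE_iff)
    qed
  qed
  then show ?thesis unfolding Dcoef_def using Sset_R by simp
qed

lemma R_small: "k < m \<Longrightarrow> R k m = 0"
  by (induction m arbitrary: k) auto

lemma R_diag: "R m m = fact m"
proof (induction m)
  case 0 then show ?case by simp
next
  case (Suc m)
  have "R (Suc m) (Suc m) = (\<Sum>k<m. (Suc m choose k) * R k m) + (Suc m choose m) * R m m"
    by simp
  also have "(\<Sum>k<m. (Suc m choose k) * R k m) = 0" by (simp add: R_small)
  finally show ?case using Suc by simp
qed

definition dd :: "('a::comm_ring_1 \<Rightarrow> 'a) \<Rightarrow> 'a \<Rightarrow> 'a" where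
  "dd g t = g (t + 1) - g t"

lemma dd_lin: "finite K \<Longrightarrow> dd (\<lambda>t. \<Sum>j\<in>K. c j * g j t) = (\<lambda>t. \<Sum>j\<in>K. c j * dd (g j) t)"
  by (rule ext) (simp add: dd_def sum_subtractf[symmetric] right_diff_distrib)

lemma dd_pow_lin: "finite K \<Longrightarrow>
  (dd ^^ k) (\<lambda>t. \<Sum>j\<in>K. c j * g j t) = (\<lambda>t. \<Sum>j\<in>K. c j * (dd ^^ k) (g j) t)"
proof (induction k arbitrary: g)
  case 0 then show ?case by simp
next
  case (Suc k)
  have "(dd ^^ Suc k) (\<lambda>t. \<Sum>j\<in>K. c j * g j t) = (dd ^^ k) (dd (\<lambda>t. \<Sum>j\<in>K. c j * g j t))"
    by (simp add: funpow_Suc_right del: funpow.simps)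
  also have "\<dots> = (dd ^^ k) (\<lambda>t. \<Sum>j\<in>K. c j * dd (g j) t)" using dd_lin[OF Suc.prems, of c g] by simp
  also have "\<dots> = (\<lambda>t. \<Sum>j\<in>K. c j * (dd ^^ k) (dd (g j)) t)" using Suc by simp
  also have "\<dots> = (\<lambda>t. \<Sum>j\<in>K. c j * (dd ^^ Suc k) (g j) t)"
    by (simp add: funpow_Suc_right del: funpow.simps)
  finally show ?case .
qed

lemma dd_power: "dd (\<lambda>t. t ^ a) = (\<lambda>t. \<Sum>k<a. of_nat (a choose k) * (\<lambda>t. t ^ k) t)"
proof (rule ext)
  fix t :: 'a
  have "(t + 1) ^ a = (\<Sum>k\<le>a. of_nat (a choose k) * t ^ k)"
    using binomial_ring[of t 1 a] by simp
  also have "\<dots> = (\<Sum>k<a. of_nat (a choose k) * t ^ k) + t ^ a"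
    by (simp add: lessThan_Suc_atMost[symmetric])
  finally show "dd (\<lambda>t. t ^ a) t = (\<Sum>k<a. of_nat (a choose k) * (\<lambda>t. t ^ k) t)"
    by (simp add: dd_def)
qed

lemma T_R: "(dd ^^ m) (\<lambda>t. t ^ a) (0::'a::comm_ring_1) = of_nat (R a m)"
proof (induction m arbitrary: a)
  case 0 then show ?case by (cases a) simp_all
next
  case (Suc m)
  have "(dd ^^ Suc m) (\<lambda>t::'a. t ^ a) = (dd ^^ m) (dd (\<lambda>t. t ^ a))"
    by (simp add: funpow_Suc_right del: funpow.simps)
  also have "\<dots> = (\<lambda>t. \<Sum>k<a. of_nat (a choose k) * (dd ^^ m) (\<lambda>t. t ^ k) t)"
    unfolding dd_power by (rule dd_pow_lin) simp
  finally show ?case using Suc by (simp add: of_nat_sum of_nat_mult)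
qed

lemma dd_shift: "(dd ^^ m) (\<lambda>s. g (s + c)) x = (dd ^^ m) g (x + c)"
proof (induction m arbitrary: g)
  case 0 then show ?case by simp
next
  case (Suc m)
  have e: "dd (\<lambda>s. g (s + c)) = (\<lambda>s. dd g (s + c))"
    by (rule ext) (simp add: dd_def add_ac)
  show ?case
    by (simp add: funpow_Suc_right e Suc del: funpow.simps)
qed

lemma dd_power_at: "(dd ^^ m) (\<lambda>t. t ^ a) (x::'a::comm_ring_1)
   = (\<Sum>k\<le>a. of_nat (a choose k) * x ^ (a - k) * of_nat (R k m))"
proof -
  have "(dd ^^ m) (\<lambda>t. t ^ a) x = (dd ^^ m) (\<lambda>s. (s + x) ^ a) 0"
    using dd_shift[of m "\<lambda>t. t ^ a" x 0] by simp
  also have "(\<lambda>s. (s + x) ^ a) = (\<lambda>s. \<Sum>k\<le>a. (of_nat (a choose k) * x ^ (a - k)) * (\<lambda>t. t ^ k) s)"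
    by (rule ext) (simp add: binomial_ring ac_simps)
  also have "(dd ^^ m) \<dots> 0 = (\<Sum>k\<le>a. (of_nat (a choose k) * x ^ (a - k)) * (dd ^^ m) (\<lambda>t. t ^ k) 0)"
    by (subst dd_pow_lin) simp_all
  finally show ?thesis by (simp add: T_R)
qed

lemma dd_power_small: "a < m \<Longrightarrow> (dd ^^ m) (\<lambda>t. t ^ a) (x::'a::comm_ring_1) = 0"
  by (simp add: dd_power_at R_small)

lemma dd_power_diag: "(dd ^^ m) (\<lambda>t. t ^ m) (x::'a::comm_ring_1) = of_nat (fact m)"
proof -
  have "(dd ^^ m) (\<lambda>t. t ^ m) x = (\<Sum>k<m. of_nat (m choose k) * x ^ (m - k) * of_nat (R k m)) + of_nat (R m m)"
    by (simp add: dd_power_at lessThan_Suc_atMost[symmetric])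
  then show ?thesis by (simp add: R_small R_diag)
qed

lemma delta_form:
  assumes "i < n"
  shows "delta i (\<lambda>x. \<Sum>e\<in>E. c e * (\<Prod>j<n. \<phi> e j (x j)))
       = (\<lambda>x. \<Sum>e\<in>E. c e * (\<Prod>j<n. ((\<phi> e)(i := dd (\<phi> e i))) j (x j)))"
proof (rule ext)
  fix x :: "nat \<Rightarrow> 'a::comm_ring_1"
  have A: "(\<Prod>j<n. \<phi> e j ((x(i := x i + 1)) j)) = \<phi> e i (x i + 1) * (\<Prod>j\<in>{..<n}-{i}. \<phi> e j (x j))" for e
    using assms by (simp add: prod.remove)
  have B: "(\<Prod>j<n. \<phi> e j (x j)) = \<phi> e i (x i) * (\<Prod>j\<in>{..<n}-{i}. \<phi> e j (x j))" for e
    using assms by (simp add: prod.remove)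
  have C: "(\<Prod>j<n. ((\<phi> e)(i := dd (\<phi> e i))) j (x j)) = dd (\<phi> e i) (x i) * (\<Prod>j\<in>{..<n}-{i}. \<phi> e j (x j))" for e
    using assms by (simp add: prod.remove)
  show "delta i (\<lambda>x. \<Sum>e\<in>E. c e * (\<Prod>j<n. \<phi> e j (x j))) x
       = (\<Sum>e\<in>E. c e * (\<Prod>j<n. ((\<phi> e)(i := dd (\<phi> e i))) j (x j)))"
    unfolding delta_def A B C dd_def
    by (simp add: sum_subtractf[symmetric] algebra_simps)
qed

lemma deltapow_form:
  assumes "i < n"
  shows "(delta i ^^ k) (\<lambda>x. \<Sum>e\<in>E. c e * (\<Prod>j<n. \<phi> e j (x j)))
       = (\<lambda>x. \<Sum>e\<in>E. c e * (\<Prod>j<n. ((\<phi> e)(i := (dd ^^ k) (\<phi> e i))) j (x j)))"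
proof (induction k arbitrary: \<phi>)
  case 0 then show ?case by (simp cong: prod.cong)
next
  case (Suc k)
  have "(delta i ^^ Suc k) (\<lambda>x. \<Sum>e\<in>E. c e * (\<Prod>j<n. \<phi> e j (x j)))
      = (delta i ^^ k) (delta i (\<lambda>x. \<Sum>e\<in>E. c e * (\<Prod>j<n. \<phi> e j (x j))))"
    by (simp add: funpow_Suc_right del: funpow.simps)
  also have "\<dots> = (\<lambda>x. \<Sum>e\<in>E. c e * (\<Prod>j<n. (((\<phi> e)(i := dd (\<phi> e i)))(i := (dd ^^ k) (((\<phi> e)(i := dd (\<phi> e i))) i))) j (x j)))"
    unfolding delta_form[OF assms] by (rule Suc.IH)
  also have "\<dots> = (\<lambda>x. \<Sum>e\<in>E. c e * (\<Prod>j<n. ((\<phi> e)(i := (dd ^^ Suc k) (\<phi> e i))) j (x j)))"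
    by (simp add: funpow_Suc_right del: funpow.simps)
  finally show ?case .
qed

lemma foldr_form:
  assumes "distinct xs" "set xs \<subseteq> {..<n}"
  shows "foldr (\<lambda>i G. (delta i ^^ m i) G) xs (\<lambda>x. \<Sum>e\<in>E. c e * (\<Prod>j<n. \<phi> e j (x j)))
       = (\<lambda>x. \<Sum>e\<in>E. c e * (\<Prod>j<n. (if j \<in> set xs then (dd ^^ m j) (\<phi> e j) else \<phi> e j) (x j)))"
  using assms
proof (induction xs)
  case Nil then show ?case by simp
next
  case (Cons i xs)
  have "foldr (\<lambda>i G. (delta i ^^ m i) G) (i # xs) (\<lambda>x. \<Sum>e\<in>E. c e * (\<Prod>j<n. \<phi> e j (x j)))
      = (delta i ^^ m i) (\<lambda>x. \<Sum>e\<in>E. c e * (\<Prod>j<n. (\<lambda>e j. if j \<in> set xs then (dd ^^ m j) (\<phi> e j) else \<phi> e j) e j (x j)))"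
    using Cons by simp
  also have "\<dots> = (\<lambda>x. \<Sum>e\<in>E. c e * (\<Prod>j<n. (((\<lambda>e j. if j \<in> set xs then (dd ^^ m j) (\<phi> e j) else \<phi> e j) e)(i := (dd ^^ m i) ((\<lambda>e j. if j \<in> set xs then (dd ^^ m j) (\<phi> e j) else \<phi> e j) e i))) j (x j)))"
    by (rule deltapow_form) (use Cons.prems in auto)
  also have "\<dots> = (\<lambda>x. \<Sum>e\<in>E. c e * (\<Prod>j<n. (if j \<in> set (i # xs) then (dd ^^ m j) (\<phi> e j) else \<phi> e j) (x j)))"
    using Cons.prems
    by (intro ext sum.cong refl arg_cong2[where f="(*)"] prod.cong) auto
  finally show ?case .
qed

lemma itd_formula:
  assumes "I \<subseteq> {..<n}"
  shows "iter_diff I m (poly_eval n p C) = (\<lambda>x. \<Sum>e\<in>expvecs n p. C e *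
     (\<Prod>j<n. (if j \<in> I then (dd ^^ m j) (\<lambda>t. t ^ e j) else (\<lambda>t. t ^ e j)) (x j)))"
proof -
  have fI: "finite I" using assms finite_subset by blast
  have "poly_eval n p C = (\<lambda>x. \<Sum>e\<in>expvecs n p. C e * (\<Prod>j<n. (\<lambda>e j t. t ^ e j) e j (x j)))"
    by (rule ext) (simp add: poly_eval_def monom_eval_def)
  then show ?thesis unfolding iter_diff_def
    using foldr_form[where xs="sorted_list_of_set I" and n=n and m=m and E="expvecs n p" and c=C and \<phi>="\<lambda>e j t. t ^ e j"] fI assms
    by simp
qed

lemma finite_expvecs: "finite (expvecs n p)"
proof -
  have "expvecs n p = {f. \<forall>x. (x \<in> {..<n} \<longrightarrow> f x \<in> {..<p}) \<and> (x \<notin> {..<n} \<longrightarrow> f x = 0)}"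
    unfolding expvecs_def lessThan_iff by (intro Collect_cong) (metis not_less)
  then show ?thesis using finite_set_of_finite_funs[of "{..<n}" "{..<p}" 0] by simp
qed

definition shift :: "nat set \<Rightarrow> (nat \<Rightarrow> nat) \<Rightarrow> (nat \<Rightarrow> nat) \<Rightarrow> nat \<Rightarrow> nat" where
  "shift I m d = (\<lambda>i. if i \<in> I then d i + m i else d i)"

lemma fS_shift: "fS I m C d = C (shift I m d)"
  unfolding fS_def shift_def ..

lemma step3:
  assumes red: "reduced_poly n p C" and I: "I \<subseteq> {..<n}"
    and h: "\<And>e. C e = 0 \<or> (\<exists>i\<in>I. e i < m i) \<Longrightarrow> h e = 0"
  shows "(\<Sum>d\<in>expvecs n p. h (shift I m d)) = (\<Sum>e\<in>expvecs n p. h e)"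
proof -
  let ?E = "expvecs n p"
  let ?E' = "{d\<in>?E. shift I m d \<in> ?E}"
  have "(\<Sum>d\<in>?E. h (shift I m d)) = (\<Sum>d\<in>?E'. h (shift I m d))"
  proof (rule sum.mono_neutral_right)
    show "finite ?E" by (rule finite_expvecs)
    show "?E' \<subseteq> ?E" by auto
    show "\<forall>d\<in>?E - ?E'. h (shift I m d) = 0"
    proof
      fix d assume "d \<in> ?E - ?E'"
      then have "shift I m d \<notin> ?E" by simp
      then have "C (shift I m d) = 0" using red unfolding reduced_poly_def by auto
      then show "h (shift I m d) = 0" using h by simp
    qed
  qed
  also have "\<dots> = (\<Sum>e\<in>shift I m ` ?E'. h e)"
  proof -
    have inj: "inj_on (shift I m) ?E'"
    proof (rule inj_onI)
      fix d1 d2 assume "shift I m d1 = shift I m d2"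
      then have "\<forall>i. shift I m d1 i = shift I m d2 i" by simp
      show "d1 = d2"
      proof (rule ext)
        fix i show "d1 i = d2 i" using \<open>\<forall>i. shift I m d1 i = shift I m d2 i\<close>[rule_format, of i]
          unfolding shift_def by (cases "i \<in> I") simp_all
      qed
    qed
    show ?thesis using sum.reindex[OF inj, of h] by (simp add: o_def)
  qed
  also have "\<dots> = (\<Sum>e\<in>?E. h e)"
  proof (rule sum.mono_neutral_left)
    show "finite ?E" by (rule finite_expvecs)
    show "shift I m ` ?E' \<subseteq> ?E" by auto
    show "\<forall>e\<in>?E - shift I m ` ?E'. h e = 0"
    proof
      fix e assume e: "e \<in> ?E - shift I m ` ?E'"
      show "h e = 0"
      proof (rule h, rule disjI2, rule ccontr)
        assume "\<not> (\<exists>i\<in>I. e i < m i)"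
        then have ge: "\<forall>i\<in>I. m i \<le> e i" by auto
        define d where "d = (\<lambda>i. if i \<in> I then e i - m i else e i)"
        have sd: "shift I m d = e" using ge unfolding d_def shift_def by auto
        have "d \<in> ?E" using e I unfolding d_def expvecs_def by auto
        then have "e \<in> shift I m ` ?E'" using sd e by force
        then show False using e by auto
      qed
    qed
  qed
  finally show ?thesis .
qed

lemma step2:
  assumes fE: "finite E" and GE: "\<And>d. G d \<noteq> 0 \<Longrightarrow> d \<in> E"
    and F: "\<And>d. G d = 0 \<Longrightarrow> F d = 0"
  shows "(\<Sum>l\<in>terms_in I G. \<Sum>d\<in>{d\<in>E. \<forall>i\<in>I. d i = l i}. F d) = (\<Sum>d\<in>E. F d)"
proof -
  let ?S = "{d\<in>E. G d \<noteq> 0}"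
  let ?f = "\<lambda>d i. if i \<in> I then d i else (0::nat)"
  have T: "terms_in I G = ?f ` ?S"
  proof
    show "terms_in I G \<subseteq> ?f ` ?S"
    proof
      fix l assume "l \<in> terms_in I G"
      then obtain d where l0: "\<forall>i. i \<notin> I \<longrightarrow> l i = 0" and d: "G d \<noteq> 0" "\<forall>i\<in>I. d i = l i"
        unfolding terms_in_def by auto
      have "l = ?f d" using l0 d by (intro ext) auto
      then show "l \<in> ?f ` ?S" using d GE by blast
    qed
    show "?f ` ?S \<subseteq> terms_in I G" unfolding terms_in_def by auto
  qed
  have inner: "(\<Sum>d\<in>{d\<in>E. \<forall>i\<in>I. d i = l i}. F d) = (\<Sum>d\<in>{d\<in>?S. ?f d = l}. F d)"
    if l: "l \<in> ?f ` ?S" for l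
  proof (rule sum.mono_neutral_right)
    show "finite {d\<in>E. \<forall>i\<in>I. d i = l i}" using fE by simp
    have l0: "\<forall>i. i \<notin> I \<longrightarrow> l i = 0" using l by auto
    have eq: "?f d = l \<longleftrightarrow> (\<forall>i\<in>I. d i = l i)" for d
      using l0 by (auto simp: fun_eq_iff)
    show "{d\<in>?S. ?f d = l} \<subseteq> {d\<in>E. \<forall>i\<in>I. d i = l i}" using eq by auto
    show "\<forall>d\<in>{d\<in>E. \<forall>i\<in>I. d i = l i} - {d\<in>?S. ?f d = l}. F d = 0"
      using eq F by auto
  qed
  have "(\<Sum>l\<in>terms_in I G. \<Sum>d\<in>{d\<in>E. \<forall>i\<in>I. d i = l i}. F d)
      = (\<Sum>l\<in>?f ` ?S. \<Sum>d\<in>{d\<in>?S. ?f d = l}. F d)"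
    unfolding T by (rule sum.cong[OF refl inner])
  also have "\<dots> = (\<Sum>d\<in>?S. F d)"
    by (rule sum.group) (use fE in auto)
  also have "\<dots> = (\<Sum>d\<in>E. F d)"
    by (rule sum.mono_neutral_left) (use fE F in auto)
  finally show ?thesis .
qed

lemma prod_split_I:
  fixes n :: nat
  assumes "I \<subseteq> {..<n}"
  shows "(\<Prod>j<n. f j) = (\<Prod>j\<in>I. f j) * (\<Prod>j\<in>{..<n}-I. f j)"
  using prod.subset_diff[OF assms finite_lessThan, of f] by (metis mult.commute)

theorem mainTheorem9:
  fixes p n :: nat and C :: "(nat \<Rightarrow> nat) \<Rightarrow> 'a::field"
    and I :: "nat set" and m :: "nat \<Rightarrow> nat"
  assumes "prime p" and "card (UNIV :: 'a set) = p"
    and "reduced_poly n p C"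
    and "I \<subseteq> {..<n}"
    and "\<forall>i\<in>I. 1 \<le> m i \<and> m i \<le> p - 1"
  shows "(\<forall>x. (\<forall>i\<in>I. x i = 0) \<longrightarrow>
            iter_diff I m (poly_eval n p C) x =
            (\<Sum>l\<in>terms_in I (fS I m C).
               (\<Prod>i\<in>I. Dcoef (m i + l i) (m i + l i) (m i)) * cofactor n p I (fS I m C) l x))
       \<and> ((\<forall>d. fS I m C d \<noteq> 0 \<longrightarrow> (\<forall>i\<in>I. d i = 0)) \<longrightarrow>
            (\<forall>x. iter_diff I m (poly_eval n p C) x =
                 of_nat (\<Prod>i\<in>I. fact (m i)) * poly_eval n p (fS I m C) x))"
proof -
  note red = assms(3) and I = assms(4) and mI = assms(5)
  let ?E = "expvecs n p"
  have fI: "finite I" using I finite_subset by blast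
  have GE: "d \<in> ?E" if "fS I m C d \<noteq> 0" for d
  proof -
    have "shift I m d \<in> ?E" using that red unfolding reduced_poly_def fS_shift by blast
    then show ?thesis using I unfolding expvecs_def shift_def
      by (auto split: if_splits)
  qed
  have partA: "iter_diff I m (poly_eval n p C) x =
            (\<Sum>l\<in>terms_in I (fS I m C).
               (\<Prod>i\<in>I. Dcoef (m i + l i) (m i + l i) (m i)) * cofactor n p I (fS I m C) l x)"
    if x0: "\<forall>i\<in>I. x i = 0" for x
  proof -
    define h where "h e = C e * ((\<Prod>i\<in>I. of_nat (R (e i) (m i))) * (\<Prod>j\<in>{..<n}-I. x j ^ e j))" for e
    define F where "F d = fS I m C d * ((\<Prod>i\<in>I. of_nat (R (m i + d i) (m i))) * (\<Prod>j\<in>{..<n}-I. x j ^ d j))" for d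
    have "iter_diff I m (poly_eval n p C) x = (\<Sum>e\<in>?E. h e)"
    proof -
      have "C e * (\<Prod>j<n. (if j \<in> I then (dd ^^ m j) (\<lambda>t. t ^ e j) else (\<lambda>t. t ^ e j)) (x j)) = h e" for e
        unfolding h_def prod_split_I[OF I] using x0
        by (simp add: T_R)
      then show ?thesis unfolding itd_formula[OF I] by simp
    qed
    also have "\<dots> = (\<Sum>d\<in>?E. h (shift I m d))"
    proof (rule step3[OF red I, symmetric])
      fix e assume "C e = 0 \<or> (\<exists>i\<in>I. e i < m i)"
      then show "h e = 0"
      proof
        assume "\<exists>i\<in>I. e i < m i"
        then obtain i where "i \<in> I" "e i < m i" by blast
        then have "(\<Prod>i\<in>I. (of_nat (R (e i) (m i)) :: 'a)) = 0"
          using fI by (auto simp: R_small intro!: bexI[of _ i])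
        then show ?thesis unfolding h_def by simp
      qed (simp add: h_def)
    qed
    also have "\<dots> = (\<Sum>d\<in>?E. F d)"
    proof (rule sum.cong[OF refl])
      fix d
      have "(\<Prod>i\<in>I. of_nat (R (shift I m d i) (m i))) = (\<Prod>i\<in>I. (of_nat (R (m i + d i) (m i)) :: 'a))"
        by (rule prod.cong) (auto simp: shift_def add.commute)
      moreover have "(\<Prod>j\<in>{..<n}-I. x j ^ shift I m d j) = (\<Prod>j\<in>{..<n}-I. x j ^ d j)"
        by (rule prod.cong) (auto simp: shift_def)
      ultimately show "h (shift I m d) = F d" unfolding h_def F_def fS_shift by simp
    qed
    also have "\<dots> = (\<Sum>l\<in>terms_in I (fS I m C). \<Sum>d\<in>{d\<in>?E. \<forall>i\<in>I. d i = l i}. F d)"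
      by (rule step2[symmetric]) (auto simp: finite_expvecs GE F_def)
    also have "\<dots> = (\<Sum>l\<in>terms_in I (fS I m C).
               (\<Prod>i\<in>I. Dcoef (m i + l i) (m i + l i) (m i)) * cofactor n p I (fS I m C) l x)"
    proof (rule sum.cong[OF refl])
      fix l
      have D: "(\<Prod>i\<in>I. Dcoef (m i + l i) (m i + l i) (m i)) = (\<Prod>i\<in>I. (of_nat (R (m i + l i) (m i)) :: 'a))"
        by (rule prod.cong) (use mI in \<open>auto simp: Dcoef_R\<close>)
      show "(\<Sum>d\<in>{d\<in>?E. \<forall>i\<in>I. d i = l i}. F d) =
            (\<Prod>i\<in>I. Dcoef (m i + l i) (m i + l i) (m i)) * cofactor n p I (fS I m C) l x"
        unfolding D cofactor_def sum_distrib_left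
      proof (rule sum.cong[OF refl])
        fix d assume "d \<in> {d\<in>?E. \<forall>i\<in>I. d i = l i}"
        then have "(\<Prod>i\<in>I. (of_nat (R (m i + d i) (m i)) :: 'a)) = (\<Prod>i\<in>I. of_nat (R (m i + l i) (m i)))"
          by (intro prod.cong) auto
        then show "F d = (\<Prod>i\<in>I. of_nat (R (m i + l i) (m i))) *
             (fS I m C d * (\<Prod>i\<in>{..<n} - I. x i ^ d i))"
          unfolding F_def by (simp add: ac_simps)
      qed
    qed
    finally show ?thesis .
  qed
  have partB: "iter_diff I m (poly_eval n p C) x =
                 of_nat (\<Prod>i\<in>I. fact (m i)) * poly_eval n p (fS I m C) x"
    if H: "\<forall>d. fS I m C d \<noteq> 0 \<longrightarrow> (\<forall>i\<in>I. d i = 0)" for x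
  proof -
    define h where "h e = C e * (if \<forall>i\<in>I. e i = m i then of_nat (\<Prod>i\<in>I. fact (m i)) * (\<Prod>j\<in>{..<n}-I. x j ^ e j) else 0)" for e
    have h0: "h e = 0" if "C e = 0 \<or> (\<exists>i\<in>I. e i < m i)" for e
      using that unfolding h_def by auto
    have "iter_diff I m (poly_eval n p C) x = (\<Sum>e\<in>?E. h e)"
    proof -
      have "C e * (\<Prod>j<n. (if j \<in> I then (dd ^^ m j) (\<lambda>t. t ^ e j) else (\<lambda>t. t ^ e j)) (x j)) = h e" for e
      proof (cases "C e = 0 \<or> (\<exists>i\<in>I. e i < m i)")
        case True
        show ?thesis
        proof (cases "C e = 0")
          case True then show ?thesis unfolding h_def by simp
        next
          case False
          then obtain i where i: "i \<in> I" "e i < m i" using \<open>C e = 0 \<or> (\<exists>i\<in>I. e i < m i)\<close> by blast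
          have "(\<Prod>j\<in>I. (if j \<in> I then (dd ^^ m j) (\<lambda>t. t ^ e j) else (\<lambda>t. t ^ e j)) (x j)) = 0"
            using fI i by (auto simp: dd_power_small intro!: bexI[of _ i])
          then show ?thesis unfolding prod_split_I[OF I] using h0[of e] True by simp
        qed
      next
        case False
        define d where "d = (\<lambda>i. if i \<in> I then e i - m i else e i)"
        have sd: "shift I m d = e" using False unfolding d_def shift_def by (auto simp: not_less)
        have "fS I m C d \<noteq> 0" using False sd by (simp add: fS_shift)
        then have d0: "\<forall>i\<in>I. d i = 0" using H by blast
        have em: "\<forall>i\<in>I. e i = m i"
        proof
          fix i assume "i \<in> I"
          then show "e i = m i" using fun_cong[OF sd, of i] d0 by (simp add: shift_def)
        qed
        have "(\<Prod>j\<in>I. (if j \<in> I then (dd ^^ m j) (\<lambda>t. t ^ e j) else (\<lambda>t. t ^ e j)) (x j))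
            = (\<Prod>j\<in>I. of_nat (fact (m j)))"
          by (rule prod.cong) (use em in \<open>auto simp: dd_power_diag\<close>)
        then show ?thesis unfolding prod_split_I[OF I] h_def using em
          by (simp add: of_nat_prod)
      qed
      then show ?thesis unfolding itd_formula[OF I] by simp
    qed
    also have "\<dots> = (\<Sum>d\<in>?E. h (shift I m d))"
      by (rule step3[OF red I, symmetric]) (rule h0)
    also have "\<dots> = of_nat (\<Prod>i\<in>I. fact (m i)) * poly_eval n p (fS I m C) x"
      unfolding poly_eval_def sum_distrib_left
    proof (rule sum.cong[OF refl])
      fix d
      show "h (shift I m d) = of_nat (\<Prod>i\<in>I. fact (m i)) * (fS I m C d * monom_eval n d x)"
      proof (cases "fS I m C d = 0")
        case True then show ?thesis unfolding h_def fS_shift by simp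
      next
        case False
        then have d0: "\<forall>i\<in>I. d i = 0" using H by blast
        then have c: "\<forall>i\<in>I. shift I m d i = m i" unfolding shift_def by simp
        have "(\<Prod>j\<in>{..<n}-I. x j ^ shift I m d j) = (\<Prod>j\<in>{..<n}-I. x j ^ d j)"
          by (rule prod.cong) (auto simp: shift_def)
        moreover have "(\<Prod>j\<in>I. x j ^ d j) = 1" using d0 by simp
        ultimately show ?thesis unfolding h_def monom_eval_def prod_split_I[OF I] fS_shift
          using c by (simp add: ac_simps)
      qed
    qed
    finally show ?thesis .
  qed
  show ?thesis using partA partB by blast
qed

end
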